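(* Let $n_0,n_1,r$ be positive integers. If there exist integers $t$ and $l$ with $t\ge r$ and $0\le l\le t$ such that $$2^t e^{-\frac{(l)_r}{(t)_r}n_1}+2^t e^{-\frac{(t-l)_r}{(t)_r}n_0}\le 1,$$ then $ch(K_{n_0,n_1})>r$.
   Context: For an integer $a$ and a positive integer $r$, $(a)_r=a(a-1)\cdots(a-r+1)$ denotes the falling factorial. For a graph $G=(V,E)$, the choice number $ch(G)$ is the minimum integer $k$ such that for every assignment of a list $S(v)$ of at least $k$ colors to each vertex $v\in V$, there is a proper vertex coloring of $G$ assigning to each vertex $v$ a color from $S(v)$. $K_{n_0,n_1}$ denotes the complete bipartite graph with parts of sizes $n_0$ and $n_1$. *)

theory Defs
  imports Complex_Main
begin

definition falling_fact :: "int \<Rightarrow> nat \<Rightarrow> int" where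
  "falling_fact a r = (\<Prod>i<r. a - int i)"

definition choosable :: "'v set \<Rightarrow> ('v \<Rightarrow> 'v \<Rightarrow> bool) \<Rightarrow> nat \<Rightarrow> bool" where
  "choosable V E k \<longleftrightarrow>
     (\<forall>S :: 'v \<Rightarrow> nat set. (\<forall>v\<in>V. finite (S v) \<and> card (S v) \<ge> k) \<longrightarrow>
        (\<exists>c. (\<forall>v\<in>V. c v \<in> S v) \<and> (\<forall>u\<in>V. \<forall>v\<in>V. E u v \<longrightarrow> c u \<noteq> c v)))"

definition choice_number :: "'v set \<Rightarrow> ('v \<Rightarrow> 'v \<Rightarrow> bool) \<Rightarrow> nat" where
  "choice_number V E = (LEAST k. choosable V E k)"

definition Kbip_V :: "nat \<Rightarrow> nat \<Rightarrow> (nat + nat) set" where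
  "Kbip_V n0 n1 = Inl ` {..<n0} \<union> Inr ` {..<n1}"

definition Kbip_E :: "nat + nat \<Rightarrow> nat + nat \<Rightarrow> bool" where
  "Kbip_E u v \<longleftrightarrow> (case (u, v) of (Inl _, Inr _) \<Rightarrow> True | (Inr _, Inl _) \<Rightarrow> True | _ \<Rightarrow> False)"

end

theory Submission
  imports Defs "HOL-Library.FuncSet"
begin

lemma binom_step: "Suc r * (n choose Suc r) = (n - r) * (n choose r)"
  using binomial_absorb_comp binomial_absorption by presburger

lemma ff_binom: "falling_fact (int n) r = fact r * int (n choose r)"
proof (induction r)
  case 0
  then show ?case by (simp add: falling_fact_def)
next
  case (Suc r)
  have "falling_fact (int n) (Suc r) = falling_fact (int n) r * (int n - int r)"
    by (simp add: falling_fact_def)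
  also have "\<dots> = fact r * (int (n choose r) * (int n - int r))" using Suc by simp
  also have "int (n choose r) * (int n - int r) = int ((n - r) * (n choose r))"
    by (cases "r \<le> n") (auto simp: of_nat_diff)
  also have "(n - r) * (n choose r) = Suc r * (n choose Suc r)" by (rule binom_step[symmetric])
  finally show ?case by (simp add: fact_Suc algebra_simps)
qed


lemma choosable_mono: assumes "choosable V E k" "k \<le> k'" shows "choosable V E k'"
  unfolding choosable_def
proof (intro allI impI)
  fix S :: "'a \<Rightarrow> nat set" assume "\<forall>v\<in>V. finite (S v) \<and> k' \<le> card (S v)"
  then have "\<forall>v\<in>V. finite (S v) \<and> k \<le> card (S v)" using assms(2) by auto
  then show "\<exists>c. (\<forall>v\<in>V. c v \<in> S v) \<and> (\<forall>u\<in>V. \<forall>v\<in>V. E u v \<longrightarrow> c u \<noteq> c v)"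
    using assms(1) unfolding choosable_def by blast
qed

lemma choosable_big: "choosable (Kbip_V n0 n1) Kbip_E (Suc n0)"
  unfolding choosable_def
proof (intro allI impI)
  fix S :: "nat + nat \<Rightarrow> nat set"
  assume S: "\<forall>v\<in>Kbip_V n0 n1. finite (S v) \<and> Suc n0 \<le> card (S v)"
  define f where "f i = (SOME x. x \<in> S (Inl i))" for i
  define U where "U = f ` {..<n0}"
  define c where "c v = (case v of Inl i \<Rightarrow> f i | Inr j \<Rightarrow> (SOME x. x \<in> S (Inr j) - U))" for v
  have fi: "f i \<in> S (Inl i)" if "i < n0" for i
  proof -
    have "Inl i \<in> Kbip_V n0 n1" using that unfolding Kbip_V_def by blast
    then have "Suc n0 \<le> card (S (Inl i))" using S by blast
    then have "S (Inl i) \<noteq> {}" by auto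
    then show ?thesis unfolding f_def by (simp add: some_in_eq)
  qed
  have gj: "c (Inr j) \<in> S (Inr j) - U" if "j < n1" for j
  proof -
    have fin: "finite (S (Inr j))" and cs: "Suc n0 \<le> card (S (Inr j))"
      using S that unfolding Kbip_V_def by auto
    have "card U \<le> n0" unfolding U_def using card_image_le[of "{..<n0}" f] by simp
    then have "S (Inr j) - U \<noteq> {}"
    proof (intro notI)
      assume "S (Inr j) - U = {}"
      then have "S (Inr j) \<subseteq> U" by blast
      then have "card (S (Inr j)) \<le> card U" unfolding U_def by (intro card_mono) auto
      then show False using cs \<open>card U \<le> n0\<close> by linarith
    qed
    then have "\<exists>x. x \<in> S (Inr j) - U" by blast
    then show ?thesis unfolding c_def sum.case by (rule someI_ex)
  qed
  show "\<exists>c. (\<forall>v\<in>Kbip_V n0 n1. c v \<in> S v) \<and>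
          (\<forall>u\<in>Kbip_V n0 n1. \<forall>v\<in>Kbip_V n0 n1. Kbip_E u v \<longrightarrow> c u \<noteq> c v)"
  proof (intro exI conjI ballI impI)
    fix v assume "v \<in> Kbip_V n0 n1"
    then show "c v \<in> S v" unfolding Kbip_V_def using fi gj by (auto simp: c_def)
  next
    fix u v assume u: "u \<in> Kbip_V n0 n1" and v: "v \<in> Kbip_V n0 n1" and e: "Kbip_E u v"
    show "c u \<noteq> c v"
    proof (cases u)
      case (Inl i)
      then obtain j where vj: "v = Inr j" "j < n1" and "i < n0" using u v e unfolding Kbip_V_def Kbip_E_def
        by (auto split: sum.splits)
      then have "c u \<in> U" using Inl by (simp add: c_def U_def)
      then show ?thesis using gj[OF vj(2)] vj by auto
    next
      case (Inr j)
      then obtain i where vi: "v = Inl i" "i < n0" and "j < n1" using u v e unfolding Kbip_V_def Kbip_E_def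
        by (auto split: sum.splits)
      then have "c v \<in> U" by (simp add: c_def U_def)
      then show ?thesis using gj[OF \<open>j < n1\<close>] Inr by auto
    qed
  qed
qed

lemma exists_good:
  fixes t l n0 n1 r :: nat
  assumes lt: "l \<le> t"
  and ineq: "real (2^t) * (real (t choose r)^n0 * real ((t choose r) - (l choose r))^n1
      + real (t choose r)^n1 * real ((t choose r) - ((t-l) choose r))^n0) < real (t choose r)^(n0+n1)"
  shows "\<exists>S0 S1. (\<forall>i<n0. S0 i \<subseteq> {..<t} \<and> card (S0 i) = r) \<and> (\<forall>j<n1. S1 j \<subseteq> {..<t} \<and> card (S1 j) = r)
     \<and> (\<forall>X \<subseteq> {..<t}. (\<exists>i<n0. S0 i \<inter> X = {}) \<or> (\<exists>j<n1. S1 j \<subseteq> X))"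
proof -
  define M where "M = t choose r"
  define T where "T = {..<t}"
  define R where "R = {A. A \<subseteq> T \<and> card A = r}"
  have finT: "finite T" unfolding T_def by simp
  have cardR: "card R = M" unfolding R_def M_def using n_subsets[OF finT] by (simp add: T_def)
  have finR: "finite R"
  proof (rule finite_subset)
    show "R \<subseteq> Pow T" unfolding R_def by auto
    show "finite (Pow T)" using finT by simp
  qed
  define \<Omega> where "\<Omega> = PiE {..<n0} (\<lambda>_. R) \<times> PiE {..<n1} (\<lambda>_. R)"
  have card\<Omega>: "card \<Omega> = M^n0 * M^n1"
    unfolding \<Omega>_def card_cartesian_product by (simp add: card_PiE cardR)
  define a where "a = M^n0 * (M - (l choose r))^n1"
  define b where "b = M^n1 * (M - ((t-l) choose r))^n0"
  define Bad where "Bad X = (if l \<le> card X then PiE {..<n0} (\<lambda>_. R) \<times> PiE {..<n1} (\<lambda>_. {A\<in>R. \<not> A \<subseteq> X})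
      else PiE {..<n0} (\<lambda>_. {A\<in>R. A \<inter> X \<noteq> {}}) \<times> PiE {..<n1} (\<lambda>_. R))" for X
  have cardsub: "card {A\<in>R. \<not> A \<subseteq> Y} = M - (card Y choose r)" if "Y \<subseteq> T" for Y
  proof -
    have fY: "finite Y" using that finT finite_subset by blast
    have "{A\<in>R. \<not> A \<subseteq> Y} = R - {A. A \<subseteq> Y \<and> card A = r}" unfolding R_def by auto
    moreover have "{A. A \<subseteq> Y \<and> card A = r} \<subseteq> R" unfolding R_def using that by auto
    ultimately show ?thesis using card_Diff_subset[of "{A. A \<subseteq> Y \<and> card A = r}" R] finR
      n_subsets[OF fY] cardR by (metis (no_types, lifting) finite_subset)
  qed
  have cardBad: "card (Bad X) \<le> a + b" if XT: "X \<subseteq> T" for X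
  proof (cases "l \<le> card X")
    case True
    have "card (Bad X) = M^n0 * (M - (card X choose r))^n1"
      using True unfolding Bad_def card_cartesian_product
      by (simp add: card_cartesian_product card_funcsetE cardR cardsub[OF XT])
    also have "\<dots> \<le> a" unfolding a_def
      by (intro mult_le_mono2 power_mono diff_le_mono2 binomial_right_mono True zero_le)
    finally show ?thesis by simp
  next
    case False
    have eq: "{A\<in>R. A \<inter> X \<noteq> {}} = {A\<in>R. \<not> A \<subseteq> T - X}" unfolding R_def by auto
    have cTX: "card (T - X) = t - card X" using XT finT by (simp add: card_Diff_subset T_def finite_subset)
    have "card (Bad X) = M^n1 * (M - (card (T - X) choose r))^n0"
      using False unfolding Bad_def card_cartesian_product eq
      by (simp add: card_cartesian_product card_funcsetE cardR cardsub)
    also have "\<dots> \<le> b" unfolding b_def cTX using False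
      by (intro mult_le_mono2 power_mono diff_le_mono2 binomial_right_mono zero_le) linarith
    finally show ?thesis by simp
  qed
  have "\<not> \<Omega> \<subseteq> (\<Union>X\<in>Pow T. Bad X)"
  proof
    assume sub: "\<Omega> \<subseteq> (\<Union>X\<in>Pow T. Bad X)"
    have "card \<Omega> \<le> card (\<Union>X\<in>Pow T. Bad X)"
      by (intro card_mono sub) (auto simp: finT Bad_def finR finite_PiE)
    also have "\<dots> \<le> (\<Sum>X\<in>Pow T. card (Bad X))" by (intro card_UN_le) (simp add: finT)
    also have "\<dots> \<le> (\<Sum>X\<in>Pow T. a + b)" by (intro sum_mono cardBad) auto
    also have "\<dots> = 2^t * (a + b)" by (simp add: card_Pow finT T_def)
    finally have "card \<Omega> \<le> 2^t * (a + b)" .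
    then have "real (M^n0 * M^n1) \<le> real (2^t * (a+b))" unfolding card\<Omega> by linarith
    then show False using ineq unfolding a_def b_def M_def
      by (simp add: power_add algebra_simps)
  qed
  then obtain \<omega> where om0: "\<omega> \<in> \<Omega>" and nb0: "\<omega> \<notin> (\<Union>X\<in>Pow T. Bad X)" by blast
  obtain S0 S1 where oeq: "\<omega> = (S0, S1)" by (cases \<omega>)
  have om: "(S0, S1) \<in> \<Omega>" using om0 oeq by simp
  have nb: "(S0, S1) \<notin> Bad X" if "X \<subseteq> T" for X using nb0 oeq that by blast
  have S0: "\<And>i. i < n0 \<Longrightarrow> S0 i \<in> R" and S1: "\<And>j. j < n1 \<Longrightarrow> S1 j \<in> R"
    using om unfolding \<Omega>_def by (auto simp: PiE_iff)
  show ?thesis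
  proof (intro exI conjI allI impI)
    fix i assume "i < n0" then show "S0 i \<subseteq> {..<t}" "card (S0 i) = r" using S0 unfolding R_def T_def by auto
  next
    fix j assume "j < n1" then show "S1 j \<subseteq> {..<t}" "card (S1 j) = r" using S1 unfolding R_def T_def by auto
  next
    fix X :: "nat set" assume XT: "X \<subseteq> {..<t}"
    show "(\<exists>i<n0. S0 i \<inter> X = {}) \<or> (\<exists>j<n1. S1 j \<subseteq> X)"
    proof (rule ccontr)
      assume H: "\<not> ?thesis"
      have "(S0, S1) \<in> Bad X"
        using H om unfolding Bad_def \<Omega>_def by (auto simp: PiE_iff S0 S1)
      then show False using nb XT T_def by auto
    qed
  qed
qed

theorem lemma3p1:
  fixes n0 n1 r :: nat
  assumes "n0 > 0" and "n1 > 0" and "r > 0"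
    and "\<exists>t l :: int. t \<ge> int r \<and> 0 \<le> l \<and> l \<le> t \<and>
           2 powr (real_of_int t) * exp (- (real_of_int (falling_fact l r) / real_of_int (falling_fact t r)) * real n1)
         + 2 powr (real_of_int t) * exp (- (real_of_int (falling_fact (t - l) r) / real_of_int (falling_fact t r)) * real n0)
         \<le> 1"
  shows "choice_number (Kbip_V n0 n1) Kbip_E > r"
proof -
  obtain ti li :: int where tr: "ti \<ge> int r" and l0: "0 \<le> li" and lt: "li \<le> ti" and
    H: "2 powr (real_of_int ti) * exp (- (real_of_int (falling_fact li r) / real_of_int (falling_fact ti r)) * real n1)
         + 2 powr (real_of_int ti) * exp (- (real_of_int (falling_fact (ti - li) r) / real_of_int (falling_fact ti r)) * real n0)
         \<le> 1" using assms(4) by blast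
  define t where "t = nat ti"
  define l where "l = nat li"
  have ti: "ti = int t" and li: "li = int l" using tr l0 assms(3) unfolding t_def l_def by auto
  have lt': "l \<le> t" and rt: "r \<le> t" using lt tr ti li by auto
  have tl: "ti - li = int (t - l)" using ti li lt' by simp
  define M where "M = t choose r"
  have Mpos: "M > 0" unfolding M_def using rt by simp
  define p where "p = real (l choose r) / real M"
  define q where "q = real ((t - l) choose r) / real M"
  have fr: "real_of_int (falling_fact (int n) r) / real_of_int (falling_fact (int t) r) = real (n choose r) / real M" for n
    unfolding ff_binom M_def by (simp add: fact_nonzero)
  have pw: "2 powr (real_of_int ti) = 2 ^ t" unfolding ti by (simp add: powr_realpow)
  have H': "2^t * exp (- p * real n1) + 2^t * exp (- q * real n0) \<le> 1"
    using H unfolding pw tl unfolding li ti fr p_def q_def by simp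
  have p1: "p \<le> 1" unfolding p_def M_def using Mpos binomial_right_mono[OF lt', of r]
    by (simp add: M_def divide_le_eq)
  have q1: "q \<le> 1" unfolding q_def M_def using Mpos binomial_right_mono[of "t - l" t r]
    by (simp add: M_def divide_le_eq)
  have p0: "p \<ge> 0" "q \<ge> 0" unfolding p_def q_def by auto
  have t1: "(1::real) \<le> 2^t" by simp
  have pp: "p > 0"
  proof (rule ccontr)
    assume "\<not> p > 0" then have "p = 0" using p0 by simp
    then have e: "exp (- p * real n1) = 1" by simp
    have "2^t + 2^t * exp (- q * real n0) \<le> (1::real)" using H' unfolding e mult_1_right .
    moreover have "(0::real) < 2^t * exp (- q * real n0)" by simp
    ultimately show False using t1 by linarith
  qed
  have qp: "q > 0"
  proof (rule ccontr)
    assume "\<not> q > 0" then have "q = 0" using p0 by simp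
    then have e: "exp (- q * real n0) = 1" by simp
    have "2^t * exp (- p * real n1) + 2^t \<le> (1::real)" using H' unfolding e mult_1_right .
    moreover have "(0::real) < 2^t * exp (- p * real n1)" by simp
    ultimately show False using t1 by linarith
  qed
  have sp: "(1 - p)^n1 < exp (- p * real n1)"
  proof -
    have "(1 - p)^n1 < exp (- p)^n1"
      using power_strict_mono[of "1 - p" "exp (-p)" n1] exp_minus_greater[of p] pp p1 assms(2) by simp
    then show ?thesis by (simp add: exp_of_nat2_mult[symmetric])
  qed
  have sq: "(1 - q)^n0 < exp (- q * real n0)"
  proof -
    have "(1 - q)^n0 < exp (- q)^n0"
      using power_strict_mono[of "1 - q" "exp (-q)" n0] exp_minus_greater[of q] qp q1 assms(1) by simp
    then show ?thesis by (simp add: exp_of_nat2_mult[symmetric])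
  qed
  have e1: "real (M - (l choose r)) = real M * (1 - p)"
    using binomial_right_mono[OF lt', of r] Mpos unfolding p_def M_def by (simp add: of_nat_diff field_simps)
  have e2: "real (M - ((t - l) choose r)) = real M * (1 - q)"
    using binomial_right_mono[of "t - l" t r] Mpos unfolding q_def M_def by (simp add: of_nat_diff field_simps)
  have "real (2^t) * (real M^n0 * real (M - (l choose r))^n1 + real M^n1 * real (M - ((t-l) choose r))^n0)
      = real M^(n0+n1) * (2^t * ((1 - p)^n1 + (1 - q)^n0))"
    unfolding e1 e2 power_mult_distrib power_add by (simp add: ring_distribs mult_ac)
  also have "\<dots> < real M^(n0+n1) * 1"
  proof (rule mult_strict_left_mono)
    have "2^t * ((1 - p)^n1 + (1 - q)^n0) < 2^t * (exp (- p * real n1) + exp (- q * real n0))"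
      using sp sq by simp
    then show "2^t * ((1 - p)^n1 + (1 - q)^n0) < 1" using H' by (simp add: algebra_simps)
    show "0 < real M ^ (n0 + n1)" using Mpos by simp
  qed
  finally have ineq: "real (2^t) * (real M^n0 * real (M - (l choose r))^n1 + real M^n1 * real (M - ((t-l) choose r))^n0)
      < real M^(n0+n1)" by (simp only: mult_1_right)
  obtain S0 S1 where S0: "\<forall>i<n0. S0 i \<subseteq> {..<t} \<and> card (S0 i) = r"
    and S1: "\<forall>j<n1. S1 j \<subseteq> {..<t} \<and> card (S1 j) = r"
    and G: "\<forall>X \<subseteq> {..<t}. (\<exists>i<n0. S0 i \<inter> X = {}) \<or> (\<exists>j<n1. S1 j \<subseteq> X)"
    using exists_good[OF lt' ineq[unfolded M_def]] by blast
  define S where "S v = (case v of Inl i \<Rightarrow> S0 i | Inr j \<Rightarrow> S1 j)" for v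
  have notch: "\<not> choosable (Kbip_V n0 n1) Kbip_E r"
  proof
    assume "choosable (Kbip_V n0 n1) Kbip_E r"
    moreover have "\<forall>v\<in>Kbip_V n0 n1. finite (S v) \<and> r \<le> card (S v)"
    proof -
      have f0: "finite (S0 i)" if "i < n0" for i using S0 that finite_subset[of "S0 i" "{..<t}"] by auto
      have f1: "finite (S1 j)" if "j < n1" for j using S1 that finite_subset[of "S1 j" "{..<t}"] by auto
      show ?thesis using S0 S1 f0 f1 unfolding Kbip_V_def S_def by auto
    qed
    ultimately obtain c where c1: "\<forall>v\<in>Kbip_V n0 n1. c v \<in> S v"
      and c2: "\<forall>u\<in>Kbip_V n0 n1. \<forall>v\<in>Kbip_V n0 n1. Kbip_E u v \<longrightarrow> c u \<noteq> c v"
      unfolding choosable_def by blast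
    define X where "X = (\<lambda>i. c (Inl i)) ` {..<n0}"
    have cl: "c (Inl i) \<in> S0 i" if "i < n0" for i
    proof -
      have "Inl i \<in> Kbip_V n0 n1" using that unfolding Kbip_V_def by blast
      then show ?thesis using c1 unfolding S_def by fastforce
    qed
    have cr: "c (Inr j) \<in> S1 j" if "j < n1" for j
    proof -
      have "Inr j \<in> Kbip_V n0 n1" using that unfolding Kbip_V_def by blast
      then show ?thesis using c1 unfolding S_def by fastforce
    qed
    have "X \<subseteq> {..<t}" unfolding X_def using cl S0 by blast
    then have "(\<exists>i<n0. S0 i \<inter> X = {}) \<or> (\<exists>j<n1. S1 j \<subseteq> X)" using G by blast
    then show False
    proof
      assume "\<exists>i<n0. S0 i \<inter> X = {}"
      then show False using cl unfolding X_def by blast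
    next
      assume "\<exists>j<n1. S1 j \<subseteq> X"
      then obtain j where j: "j < n1" "S1 j \<subseteq> X" by blast
      then obtain i where i: "i < n0" "c (Inr j) = c (Inl i)" using cr unfolding X_def by blast
      have "Inl i \<in> Kbip_V n0 n1" "Inr j \<in> Kbip_V n0 n1" using i j unfolding Kbip_V_def by auto
      moreover have "Kbip_E (Inl i) (Inr j)" by (simp add: Kbip_E_def)
      ultimately show False using c2 i by metis
    qed
  qed
  have ex: "choosable (Kbip_V n0 n1) Kbip_E (Suc n0)" by (rule choosable_big)
  have "choosable (Kbip_V n0 n1) Kbip_E (choice_number (Kbip_V n0 n1) Kbip_E)"
    unfolding choice_number_def by (rule LeastI[where P="choosable (Kbip_V n0 n1) Kbip_E", OF ex])
  then show ?thesis using notch choosable_mono by (metis not_le)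
qed
end
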